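(* For every $n\in\mathcal{N}_{z_q}$, \[ |\Gamma_{z_q,n}|=c_n\, r_K(n-2\lambda^2)\, r_K(n+2\lambda^2), \] where $c_n=1/2$ if either ($q$ is even and $2\mid n$) or ($q$ is odd and $q\mid 2n$), and $c_n=1/4$ otherwise. (Here $n\pm2\lambda^2$ are non-negative integers, and $r_K(0)=1$.)
   Context: Let $q\in\{3,4,7,8,11,19,43,67,163\}$ and let $K$ be the imaginary quadratic field of discriminant $-q$ (class number one), with ring of integers $\mathcal{O}_K$ and norm $N$. For an integer $M\geq 0$, $r_K(M)$ denotes the number of $\alpha\in\mathcal{O}_K$ with $N(\alpha)=M$. Let $z_q=\mu+i\lambda$ where $\mu=0$ if $q\in\{4,8\}$, $\mu=1/2$ otherwise, and $\lambda=\sqrt{q}/2$. Let $\mathbb{H}$ be the upper half-plane with hyperbolic distance $\rho$, $\cosh\rho(z,w)=1+\frac{|z-w|^2}{2\,\mathrm{Im}(z)\mathrm{Im}(w)}$, and $\Gamma=\mathrm{PSL}(2,\mathbb{Z})$ acting by Möbius transformations. For $\gamma\in\Gamma$ set $\mathcal{R}(\gamma;z_q)=2\lambda^2\cosh\rho(z_q,\gamma z_q)$, $\mathcal{N}_{z_q}=\{\mathcal{R}(\gamma;z_q):\gamma\in\Gamma\}$, and $\Gamma_{z_q,n}=\{\gamma\in\Gamma:\mathcal{R}(\gamma;z_q)=n\}$. *)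

theory Defs
  imports Complex_Main
begin

text \<open>The admissible values of q (class number one, discriminant -q).\<close>
definition q_vals :: "nat set" where
  "q_vals = {3,4,7,8,11,19,43,67,163}"

text \<open>Generator of the ring of integers O_K of K = Q(sqrt(-q)), embedded in C:
  O_K = Z[(1+sqrt(-q))/2] for q odd, O_K = Z[sqrt(-q/4)] for q in {4,8}.\<close>
definition omegaK :: "nat \<Rightarrow> complex" where
  "omegaK q = (if odd q then Complex (1/2) (sqrt (real q) / 2)
               else Complex 0 (sqrt (real q / 4)))"

definition OK :: "nat \<Rightarrow> complex set" where
  "OK q = {of_int a + of_int b * omegaK q | a b :: int. True}"

definition normK :: "complex \<Rightarrow> real" where
  "normK \<alpha> = (cmod \<alpha>)\<^sup>2"

definition rK :: "nat \<Rightarrow> real \<Rightarrow> nat" where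
  "rK q M = card {\<alpha> \<in> OK q. normK \<alpha> = M}"

definition lam :: "nat \<Rightarrow> real" where
  "lam q = sqrt (real q) / 2"

definition mu :: "nat \<Rightarrow> real" where
  "mu q = (if q \<in> {4,8} then 0 else 1/2)"

definition zq :: "nat \<Rightarrow> complex" where
  "zq q = Complex (mu q) (lam q)"

definition cosh_dist :: "complex \<Rightarrow> complex \<Rightarrow> real" where
  "cosh_dist z w = 1 + (cmod (z - w))\<^sup>2 / (2 * Im z * Im w)"

definition SL2Z :: "(int \<times> int \<times> int \<times> int) set" where
  "SL2Z = {(a,b,c,d). a * d - b * c = 1}"

fun negm :: "int \<times> int \<times> int \<times> int \<Rightarrow> int \<times> int \<times> int \<times> int" where
  "negm (a,b,c,d) = (-a,-b,-c,-d)"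

definition PSL2Z :: "(int \<times> int \<times> int \<times> int) set set" where
  "PSL2Z = (\<lambda>g. {g, negm g}) ` SL2Z"

fun mob :: "int \<times> int \<times> int \<times> int \<Rightarrow> complex \<Rightarrow> complex" where
  "mob (a,b,c,d) z = (of_int a * z + of_int b) / (of_int c * z + of_int d)"

text \<open>Action of an element of PSL(2,Z) (independent of the representative).\<close>
definition pact :: "(int \<times> int \<times> int \<times> int) set \<Rightarrow> complex \<Rightarrow> complex" where
  "pact \<gamma> z = mob (SOME g. g \<in> \<gamma>) z"

definition Rq :: "nat \<Rightarrow> (int \<times> int \<times> int \<times> int) set \<Rightarrow> real" where
  "Rq q \<gamma> = 2 * (lam q)\<^sup>2 * cosh_dist (zq q) (pact \<gamma> (zq q))"

definition Nset :: "nat \<Rightarrow> real set" where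
  "Nset q = Rq q ` PSL2Z"

definition Gamma_n :: "nat \<Rightarrow> real \<Rightarrow> (int \<times> int \<times> int \<times> int) set set" where
  "Gamma_n q n = {\<gamma> \<in> PSL2Z. Rq q \<gamma> = n}"

definition cn :: "nat \<Rightarrow> real \<Rightarrow> real" where
  "cn q n = (if (even q \<and> (\<exists>k::int. n = 2 * of_int k)) \<or>
                (odd q \<and> (\<exists>k::int. 2 * n = real q * of_int k))
             then 1/2 else 1/4)"

end

theory Submission
  imports Defs "HOL-Computational_Algebra.Primes"
begin


definition mm :: "nat \<Rightarrow> int" where
  "mm q = (if odd q then (int q + 1) div 4 else int q div 4)"

fun Nf :: "nat \<Rightarrow> int \<times> int \<Rightarrow> int" where
  "Nf q (x,y) = (if odd q then y^2 + x*y + mm q * x^2 else y^2 + mm q * x^2)"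

definition emb :: "nat \<Rightarrow> int \<times> int \<Rightarrow> complex" where
  "emb q p = of_int (snd p) + of_int (fst p) * omegaK q"

lemma qv: "q \<in> q_vals \<Longrightarrow>
   (odd q \<and> int q = 4 * mm q - 1 \<and> prime q) \<or> (even q \<and> int q = 4 * mm q \<and> (q = 4 \<or> q = 8))"
proof -
  have p: "prime (3::nat)" "prime (7::nat)" "prime (11::nat)" "prime (19::nat)" "prime (43::nat)"
     "prime (67::nat)" "prime (163::nat)"
    by (simp_all only: prime_nat_iff' atLeastLessThan_upt) (simp_all add: upt_rec)
  assume "q \<in> q_vals"
  then show ?thesis unfolding q_vals_def mm_def using p by auto
qed

lemma q_pos: "q \<in> q_vals \<Longrightarrow> q > 0"
  unfolding q_vals_def by auto

lemma lam_pos: "q \<in> q_vals \<Longrightarrow> lam q > 0"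
  using q_pos unfolding lam_def by auto

lemma lam_sq: "(lam q)^2 = real q / 4"
  unfolding lam_def by (simp add: power_divide)

lemma omega_eq: "q \<in> q_vals \<Longrightarrow> omegaK q = zq q"
proof -
  assume q: "q \<in> q_vals"
  have s: "sqrt (real q / 4) = sqrt (real q) / 2"
    by (simp add: real_sqrt_divide)
  show ?thesis using q unfolding omegaK_def zq_def mu_def lam_def q_vals_def
    by (auto simp: s)
qed

lemma mu_odd: "q \<in> q_vals \<Longrightarrow> odd q \<Longrightarrow> mu q = 1/2"
  unfolding mu_def by auto
lemma mu_even: "q \<in> q_vals \<Longrightarrow> \<not> odd q \<Longrightarrow> mu q = 0"
  unfolding mu_def q_vals_def by auto

lemma normK_emb: assumes q: "q \<in> q_vals" shows "normK (emb q (x,y)) = of_int (Nf q (x,y))"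
proof -
  have z: "omegaK q = Complex (mu q) (lam q)" using omega_eq[OF q] unfolding zq_def by simp
  have "normK (emb q (x,y)) = (y + x * mu q)^2 + (x * lam q)^2"
    unfolding normK_def emb_def cmod_power2 z by simp
  also have "\<dots> = of_int (Nf q (x,y))"
  proof (cases "odd q")
    case True
    then have m: "real q = 4 * real_of_int (mm q) - 1" using qv[OF q]
      by (metis of_int_diff of_int_mult of_int_numeral of_int_of_nat_eq of_int_1)
    have l: "(lam q)^2 = real_of_int (mm q) - 1/4" using lam_sq[of q] m by simp
    show ?thesis unfolding power_mult_distrib l mu_odd[OF q True] using True by (simp add: algebra_simps power2_eq_square)
  next
    case False
    then have m: "real q = 4 * real_of_int (mm q)" using qv[OF q]
      by (metis of_int_mult of_int_numeral of_int_of_nat_eq)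
    have l: "(lam q)^2 = real_of_int (mm q)" using lam_sq[of q] m by simp
    show ?thesis unfolding power_mult_distrib l mu_even[OF q False] using False by (simp add: algebra_simps)
  qed
  finally show ?thesis .
qed



definition Rg :: "nat \<Rightarrow> int \<times> int \<times> int \<times> int \<Rightarrow> real" where
  "Rg q g = 2 * (lam q)\<^sup>2 * cosh_dist (zq q) (mob g (zq q))"

fun Phi :: "nat \<Rightarrow> int \<times> int \<times> int \<times> int \<Rightarrow> (int \<times> int) \<times> (int \<times> int)" where
  "Phi q (a,b,c,d) = (if odd q then ((c+d-a, -(c*mm q+b)), (a+d, c*mm q-a-b))
                      else ((d-a, -(c*mm q+b)), (a+d, c*mm q-b)))"

lemma zsq: assumes q: "q \<in> q_vals"
  shows "zq q * zq q = (if odd q then zq q - of_int (mm q) else - of_int (mm q))"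
proof (cases "odd q")
  case True
  then have m: "real q = 4 * real_of_int (mm q) - 1" using qv[OF q]
    by (metis of_int_diff of_int_mult of_int_numeral of_int_of_nat_eq of_int_1)
  have l: "lam q * lam q = real_of_int (mm q) - 1/4" using lam_sq[of q] m by (simp add: power2_eq_square)
  show ?thesis unfolding zq_def mu_odd[OF q True] using True l
    by (simp add: complex_eq_iff)
next
  case False
  then have m: "real q = 4 * real_of_int (mm q)" using qv[OF q]
    by (metis of_int_mult of_int_numeral of_int_of_nat_eq)
  have l: "lam q * lam q = real_of_int (mm q)" using lam_sq[of q] m by (simp add: power2_eq_square)
  show ?thesis unfolding zq_def mu_even[OF q False] using False l
    by (simp add: complex_eq_iff)
qed

lemma E_eq: assumes q: "q \<in> q_vals"
  shows "zq q * (of_int c * zq q + of_int d) - (of_int a * zq q + of_int b)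
         = emb q (fst (Phi q (a,b,c,d)))"
proof -
  let ?z = "zq q"
  have "?z * (of_int c * ?z + of_int d) - (of_int a * ?z + of_int b)
       = of_int c * (?z * ?z) + (of_int d - of_int a) * ?z - of_int b"
    by (simp add: algebra_simps)
  also have "\<dots> = emb q (fst (Phi q (a,b,c,d)))"
    unfolding zsq[OF q] emb_def omega_eq[OF q]
    by (simp add: algebra_simps)
  finally show ?thesis .
qed

lemma Rg_eq: assumes q: "q \<in> q_vals" and det: "a*d - b*c = 1"
  shows "Rg q (a,b,c,d) = real q / 2 + of_int (Nf q (fst (Phi q (a,b,c,d))))"
proof -
  define z where "z = zq q"
  define D where "D = of_int c * z + of_int d"
  define N where "N = of_int a * z + of_int b"
  define E where "E = z * D - N"
  have lp: "lam q > 0" using lam_pos[OF q] .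
  have ReD: "Re D = c * mu q + d" and ImD: "Im D = c * lam q"
    unfolding D_def z_def zq_def by simp_all
  have ReN: "Re N = a * mu q + b" and ImN: "Im N = a * lam q"
    unfolding N_def z_def zq_def by simp_all
  have D0: "D \<noteq> 0"
  proof
    assume "D = 0"
    then have "c * lam q = 0" "c * mu q + d = 0" using ReD ImD by auto
    then have "c = 0" "d = 0" using lp by auto
    then show False using det by simp
  qed
  have nD: "(cmod D)^2 > 0" using D0 by simp
  have "Im (N / D) = (Im N * Re D - Re N * Im D) / (cmod D)^2" by (rule Im_divide')
  also have "Im N * Re D - Re N * Im D = lam q * (a*d - b*c)"
    unfolding ReD ImD ReN ImN by (simp add: algebra_simps)
  finally have ImW: "Im (N / D) = lam q / (cmod D)^2" using det by simp
  have zw: "z - N / D = E / D" unfolding E_def using D0 by (simp add: field_simps)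
  have cz: "(cmod (z - N/D))^2 = (cmod E)^2 / (cmod D)^2"
    unfolding zw by (simp add: norm_divide power_divide)
  have Imz: "Im z = lam q" unfolding z_def zq_def by simp
  have mobeq: "mob (a,b,c,d) z = N / D" unfolding N_def D_def by simp
  have "cosh_dist z (mob (a,b,c,d) z) = 1 + (cmod E)^2 / (2 * (lam q)^2)"
    unfolding cosh_dist_def mobeq cz ImW Imz using nD lp D0
    by (simp add: field_simps power2_eq_square)
  then have "Rg q (a,b,c,d) = 2 * (lam q)^2 + (cmod E)^2"
    unfolding Rg_def z_def[symmetric] using lp by (simp add: field_simps)
  also have "(cmod E)^2 = of_int (Nf q (fst (Phi q (a,b,c,d))))"
  proof -
    have "E = emb q (fst (Phi q (a,b,c,d)))" unfolding E_def D_def N_def z_def by (rule E_eq[OF q])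
    moreover obtain x y where "fst (Phi q (a,b,c,d)) = (x,y)" by (cases "fst (Phi q (a,b,c,d))")
    ultimately show ?thesis using normK_emb[OF q, of x y] unfolding normK_def by simp
  qed
  finally show ?thesis using lam_sq[of q] by simp
qed



fun Cq :: "nat \<Rightarrow> (int \<times> int) \<times> (int \<times> int) \<Rightarrow> bool" where
  "Cq q ((x1,y1),(x2,y2)) = (if odd q then int q dvd (x2 - x1 + 2*(y2-y1))
       else (2 dvd (x2 - x1) \<and> 2 * mm q dvd (y2 - y1)))"

fun Psi :: "nat \<Rightarrow> (int \<times> int) \<times> (int \<times> int) \<Rightarrow> int \<times> int \<times> int \<times> int" where
  "Psi q ((x1,y1),(x2,y2)) = (if odd q then
     (let c = (x2 - x1 + 2*(y2-y1)) div int q; a = 2*c*mm q - (y2-y1) in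
       (a, -(c * mm q + y1), c, x2 - a))
   else ((x2-x1) div 2, -(y1+y2) div 2, (y2-y1) div (2*mm q), (x2+x1) div 2))"

lemma NfPhi: assumes q: "q \<in> q_vals"
  shows "Nf q (snd (Phi q (a,b,c,d))) = Nf q (fst (Phi q (a,b,c,d))) + int q * (a*d - b*c)"
proof (cases "odd q")
  case True
  then have m: "int q = 4 * mm q - 1" using qv[OF q] by auto
  show ?thesis using True unfolding m by (simp add: power2_eq_square algebra_simps)
next
  case False
  then have m: "int q = 4 * mm q" using qv[OF q] by auto
  show ?thesis using False unfolding m by (simp add: power2_eq_square algebra_simps)
qed

lemma C_Phi: assumes q: "q \<in> q_vals" shows "Cq q (Phi q (a,b,c,d))"
proof (cases "odd q")
  case True
  then have m: "int q = 4 * mm q - 1" using qv[OF q] by auto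
  have "(a + d) - (c + d - a) + 2 * ((c * mm q - a - b) - (-(c * mm q + b))) = int q * c"
    unfolding m by (simp add: algebra_simps)
  then show ?thesis using True by simp
next
  case False
  have "(a + d) - (d - a) = 2 * a" "(c * mm q - b) - (-(c * mm q + b)) = 2 * mm q * c" by simp_all
  then show ?thesis using False by simp
qed

lemma mm_pos: "q \<in> q_vals \<Longrightarrow> mm q > 0"
  unfolding q_vals_def mm_def by auto

lemma Psi_Phi: assumes q: "q \<in> q_vals" shows "Psi q (Phi q (a,b,c,d)) = (a,b,c,d)"
proof (cases "odd q")
  case True
  then have m: "int q = 4 * mm q - 1" using qv[OF q] by auto
  have qp: "int q > 0" using q_pos[OF q] by simp
  have e: "(a + d) - (c + d - a) + 2 * ((c * mm q - a - b) - (-(c * mm q + b))) = c * int q"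
    unfolding m by (simp add: algebra_simps)
  have cc: "((a + d) - (c + d - a) + 2 * ((c * mm q - a - b) - (-(c * mm q + b)))) div int q = c"
    unfolding e using qp by simp
  show ?thesis using True cc by (simp add: Let_def algebra_simps)
next
  case False
  have mp: "mm q > 0" using mm_pos[OF q] .
  have e1: "((a + d) - (d - a)) div 2 = a" by simp
  have e2: "(-(-(c * mm q + b) + (c * mm q - b))) div 2 = b" by simp
  have e3: "((c * mm q - b) - (-(c * mm q + b))) div (2 * mm q) = c"
  proof -
    have "(c * mm q - b) - (-(c * mm q + b)) = c * (2 * mm q)" by (simp add: algebra_simps)
    then show ?thesis using mp by simp
  qed
  have e4: "((a + d) + (d - a)) div 2 = d" by simp
  show ?thesis using False e1 e2 e3 e4 by simp
qed

lemma Phi_Psi: assumes q: "q \<in> q_vals" and C: "Cq q ((x1,y1),(x2,y2))"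
  shows "Phi q (Psi q ((x1,y1),(x2,y2))) = ((x1,y1),(x2,y2))"
proof (cases "odd q")
  case True
  then have m: "int q = 4 * mm q - 1" using qv[OF q] by auto
  have qp: "int q > 0" using q_pos[OF q] by simp
  from C True obtain k where k: "x2 - x1 + 2*(y2-y1) = int q * k" by (auto elim: dvdE)
  have kk: "(x2 - x1 + 2*(y2-y1)) div int q = k" unfolding k using qp by simp
  have "x2 - x1 + 2*(y2-y1) = (4 * mm q - 1) * k" using k m by simp
  then show ?thesis using True kk by (simp add: Let_def algebra_simps)
next
  case False
  have mp: "mm q > 0" using mm_pos[OF q] .
  from C False have "2 dvd (x2 - x1)" "2 * mm q dvd (y2 - y1)" by simp_all
  then obtain k1 k2 where k1: "x2 - x1 = 2 * k1" and k2: "y2 - y1 = 2 * mm q * k2"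
    by (metis dvdE)
  have x2: "x2 = x1 + 2*k1" and y2: "y2 = y1 + 2 * mm q * k2" using k1 k2 by simp_all
  have a: "(x2-x1) div 2 = k1" using k1 by simp
  have b: "-(y1+y2) div 2 = -(y1 + mm q * k2)"
  proof -
    have "-(y1+y2) = 2 * (-(y1 + mm q * k2))" unfolding y2 by (simp add: algebra_simps)
    then show ?thesis by simp
  qed
  have c: "(y2-y1) div (2*mm q) = k2" unfolding k2 using mp by simp
  have d: "(x2+x1) div 2 = x1 + k1"
  proof -
    have "x2+x1 = 2 * (x1 + k1)" unfolding x2 by simp
    then show ?thesis by simp
  qed
  show ?thesis using False a b c d x2 y2 by (simp add: algebra_simps)
qed



lemma sq4: "\<exists>k. (z::int)^2 = 4*k + (if even z then 0 else 1)"
proof (cases "even z")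
  case True then obtain t where "z = 2*t" by (auto elim: evenE)
  then show ?thesis using True by (intro exI[of _ "t^2"]) (simp add: power2_eq_square)
next
  case False then obtain t where "z = 2*t+1" by (auto elim: oddE)
  then show ?thesis using False by (intro exI[of _ "t^2+t"]) (simp add: power2_eq_square algebra_simps)
qed

lemma sq8: "odd (z::int) \<Longrightarrow> \<exists>k. z^2 = 8*k + 1"
proof -
  assume "odd z" then obtain t where t: "z = 2*t+1" by (auto elim: oddE)
  have "even (t*(t+1))" by simp
  then obtain s where s: "t*(t+1) = 2*s" by (metis dvdE)
  have "z^2 = 4*(t*(t+1)) + 1" unfolding t by (simp add: power2_eq_square algebra_simps)
  then show ?thesis unfolding s by (intro exI[of _ s]) simp
qed

lemma odd_key:
  fixes Q m A x1 y1 x2 y2 :: int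
  assumes p: "prime Q" and Qm: "Q = 4*m - 1"
    and h1: "y1^2 + x1*y1 + m*x1^2 = A" and h2: "y2^2 + x2*y2 + m*x2^2 = A + Q"
  shows "(Q dvd A \<longrightarrow> Q dvd (x2-x1+2*(y2-y1))) \<and>
         (\<not> Q dvd A \<longrightarrow> (Q dvd (x2-x1+2*(y2-y1)) \<longleftrightarrow> \<not> Q dvd (-x2-x1+2*(-y2-y1))))"
proof -
  define s1 where "s1 = x1 + 2*y1"
  define s2 where "s2 = x2 + 2*y2"
  have e1: "s1^2 + Q * x1^2 = 4*A" unfolding s1_def Qm h1[symmetric] by (simp add: power2_eq_square algebra_simps)
  have e2': "s2^2 + Q * x2^2 = 4*(y2^2 + x2*y2 + m*x2^2)" unfolding s2_def Qm
    by (simp add: power2_eq_square algebra_simps)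
  have e2: "s2^2 + Q * x2^2 = 4*A + 4*Q" unfolding e2' h2 by simp
  have Q2: "\<not> Q dvd 2"
  proof
    assume "Q dvd 2"
    then have "Q \<le> 2" by (simp add: zdvd_imp_le)
    moreover have "Q \<ge> 2" using p by (simp add: prime_ge_2_int)
    ultimately show False using Qm by presburger
  qed
  have Q4: "\<not> Q dvd 4"
  proof
    assume "Q dvd 4"
    moreover have "(4::int) = 2*2" by simp
    ultimately show False using Q2 prime_dvd_mult_iff[OF p, of 2 2] by metis
  qed
  have d1: "Q dvd s1 \<longleftrightarrow> Q dvd A"
  proof -
    have "Q dvd s1 \<longleftrightarrow> Q dvd s1^2" using p by (simp add: prime_dvd_power_iff)
    also have "s1^2 = 4*A + Q*(- (x1^2))" using e1 by simp
    also have "Q dvd (4*A + Q*(- (x1^2))) \<longleftrightarrow> Q dvd 4*A"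
      by (metis dvd_add_left_iff dvd_triv_left)
    also have "\<dots> \<longleftrightarrow> Q dvd A" using p Q4 by (simp add: prime_dvd_mult_iff)
    finally show ?thesis .
  qed
  have d2: "Q dvd s2 \<longleftrightarrow> Q dvd A"
  proof -
    have "Q dvd s2 \<longleftrightarrow> Q dvd s2^2" using p by (simp add: prime_dvd_power_iff)
    also have "s2^2 = 4*A + Q * (4 - x2^2)" using e2 by (simp add: algebra_simps)
    also have "Q dvd (4*A + Q * (4 - x2^2)) \<longleftrightarrow> Q dvd 4*A"
      by (metis dvd_add_left_iff dvd_triv_left)
    also have "\<dots> \<longleftrightarrow> Q dvd A" using p Q4 by (simp add: prime_dvd_mult_iff)
    finally show ?thesis .
  qed
  have x: "x2-x1+2*(y2-y1) = s2 - s1" "-x2-x1+2*(-y2-y1) = -(s2 + s1)"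
    unfolding s1_def s2_def by simp_all
  have prod: "Q dvd (s2 - s1) * (s2 + s1)"
  proof -
    have "(s2 - s1) * (s2 + s1) = Q * (4 - x2^2 + x1^2)" using e1 e2
      by (simp add: power2_eq_square algebra_simps)
    then show ?thesis by simp
  qed
  show ?thesis
  proof (intro conjI impI)
    assume "Q dvd A"
    then show "Q dvd (x2-x1+2*(y2-y1))" unfolding x using d1 d2 by simp
  next
    assume nA: "\<not> Q dvd A"
    have one: "Q dvd (s2 - s1) \<or> Q dvd (s2 + s1)" using prod p by (simp add: prime_dvd_mult_iff)
    have notboth: "\<not> (Q dvd (s2 - s1) \<and> Q dvd (s2 + s1))"
    proof
      assume "Q dvd (s2 - s1) \<and> Q dvd (s2 + s1)"
      then have "Q dvd (s2 + s1) - (s2 - s1)" by (meson dvd_diff)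
      moreover have "(s2 + s1) - (s2 - s1) = 2 * s1" by simp
      ultimately have "Q dvd 2 * s1" by metis
      then have "Q dvd s1" using p Q2 by (simp add: prime_dvd_mult_iff)
      then show False using d1 nA by simp
    qed
    show "Q dvd (x2-x1+2*(y2-y1)) \<longleftrightarrow> \<not> Q dvd (-x2-x1+2*(-y2-y1))"
    proof -
      have "- s2 - s1 = -(s2+s1)" by simp
      then have mn: "Q dvd (- s2 - s1) \<longleftrightarrow> Q dvd (s2 + s1)" by (metis dvd_minus_iff)
      show ?thesis unfolding x using one notboth mn by auto
    qed
  qed
qed



lemma sq8': "\<exists>k. odd (z::int) \<longrightarrow> z^2 = 8*k + 1"
  using sq8 by blast

lemma sqy: "\<exists>t c. even (y::int) \<longrightarrow> y = 2*t \<and> y^2 = 16*c + (if even t then 0 else 4)"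
proof (cases "even y")
  case True
  then obtain t where t: "y = 2*t" by (auto elim: evenE)
  obtain c where c: "t^2 = 4*c + (if even t then 0 else 1)" using sq4 by blast
  have "y^2 = 16*c + (if even t then 0 else 4)" unfolding t using c by (simp add: power_mult_distrib)
  then show ?thesis using t by blast
qed auto

lemma even4:
  fixes A x1 y1 x2 y2 :: int
  assumes h1: "y1^2 + x1^2 = A" and h2: "y2^2 + x2^2 = A + 4"
  shows "(even A \<longrightarrow> 2 dvd (x2-x1) \<and> 2 dvd (y2-y1)) \<and>
         (odd A \<longrightarrow> ((2 dvd (x2-x1) \<and> 2 dvd (y2-y1)) \<longleftrightarrow> \<not>(2 dvd (y2 - x1) \<and> 2 dvd (x2 - y1))))"
proof -
  obtain a1 where a1: "x1^2 = 4*a1 + (if even x1 then 0 else 1)" using sq4 by blast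
  obtain b1 where b1: "y1^2 = 4*b1 + (if even y1 then 0 else 1)" using sq4 by blast
  obtain a2 where a2: "x2^2 = 4*a2 + (if even x2 then 0 else 1)" using sq4 by blast
  obtain b2 where b2: "y2^2 = 4*b2 + (if even y2 then 0 else 1)" using sq4 by blast
  have l1: "4*b1 + (if even y1 then 0 else 1) + (4*a1 + (if even x1 then 0 else 1)) = A"
    using h1 unfolding a1 b1 .
  have l2: "4*b2 + (if even y2 then 0 else 1) + (4*a2 + (if even x2 then 0 else 1)) = A + 4"
    using h2 unfolding a2 b2 .
  from l1 l2 show ?thesis by presburger
qed

lemma even8:
  fixes A x1 y1 x2 y2 :: int
  assumes h1: "y1^2 + 2*x1^2 = A" and h2: "y2^2 + 2*x2^2 = A + 8"
  shows "(even A \<longrightarrow> 2 dvd (x2-x1) \<and> 4 dvd (y2-y1)) \<and>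
         (odd A \<longrightarrow> ((2 dvd (x2-x1) \<and> 4 dvd (y2-y1)) \<longleftrightarrow> \<not>(2 dvd (x2-x1) \<and> 4 dvd (-y2-y1))))"
proof -
  define X1 where "X1 = x1^2"
  define X2 where "X2 = x2^2"
  define Y1 where "Y1 = y1^2"
  define Y2 where "Y2 = y2^2"
  obtain a1 where a1: "X1 = 4*a1 + (if even x1 then 0 else 1)" using sq4 unfolding X1_def by blast
  obtain a2 where a2: "X2 = 4*a2 + (if even x2 then 0 else 1)" using sq4 unfolding X2_def by blast
  obtain c1 where c1: "odd x1 \<longrightarrow> X1 = 8*c1 + 1" using sq8' unfolding X1_def by blast
  obtain c2 where c2: "odd x2 \<longrightarrow> X2 = 8*c2 + 1" using sq8' unfolding X2_def by blast
  obtain d1 where d1: "odd y1 \<longrightarrow> Y1 = 8*d1 + 1" using sq8' unfolding Y1_def by blast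
  obtain d2 where d2: "odd y2 \<longrightarrow> Y2 = 8*d2 + 1" using sq8' unfolding Y2_def by blast
  obtain t1 e1 where t1: "even y1 \<longrightarrow> y1 = 2*t1 \<and> Y1 = 16*e1 + (if even t1 then 0 else 4)"
    using sqy unfolding Y1_def by blast
  obtain t2 e2 where t2: "even y2 \<longrightarrow> y2 = 2*t2 \<and> Y2 = 16*e2 + (if even t2 then 0 else 4)"
    using sqy unfolding Y2_def by blast
  have l1: "Y1 + 2*X1 = A" using h1 unfolding X1_def Y1_def .
  have l2: "Y2 + 2*X2 = A + 8" using h2 unfolding X2_def Y2_def .
  show ?thesis
  proof (rule conjI[OF impI impI])
    assume eA: "even A"
    have ey1: "even y1" using l1 a1 d1 eA by presburger
    have ey2: "even y2" using l2 a2 d2 eA by presburger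
    have t1': "y1 = 2*t1" "Y1 = 16*e1 + (if even t1 then 0 else 4)" using t1 ey1 by auto
    have t2': "y2 = 2*t2" "Y2 = 16*e2 + (if even t2 then 0 else 4)" using t2 ey2 by auto
    have xp: "even x1 \<longleftrightarrow> even x2" using l1 l2 a1 a2 t1'(2) t2'(2) by presburger
    have tp: "even t1 \<longleftrightarrow> even t2"
    proof (cases "even x1")
      case True
      then have "even x2" using xp by simp
      then show ?thesis using True l1 l2 a1 a2 t1'(2) t2'(2) by presburger
    next
      case False
      then have "odd x2" using xp by simp
      then show ?thesis using False l1 l2 c1 c2 t1'(2) t2'(2) by presburger
    qed
    show "2 dvd (x2-x1) \<and> 4 dvd (y2-y1)" using xp tp t1'(1) t2'(1) by presburger
  next
    assume oA: "odd A"
    have oy1: "odd y1" using l1 t1 oA by presburger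
    have oy2: "odd y2" using l2 t2 oA by presburger
    have d1': "Y1 = 8*d1 + 1" and d2': "Y2 = 8*d2 + 1" using d1 d2 oy1 oy2 by auto
    have xp: "even x1 \<longleftrightarrow> even x2" using l1 l2 a1 a2 d1' d2' by presburger
    show "(2 dvd (x2-x1) \<and> 4 dvd (y2-y1)) \<longleftrightarrow> \<not>(2 dvd (x2-x1) \<and> 4 dvd (-y2-y1))"
      using xp oy1 oy2 by presburger
  qed
qed



definition P :: "nat \<Rightarrow> int \<Rightarrow> (int \<times> int) set" where
  "P q A = {p. Nf q p = A}"

fun sig :: "nat \<Rightarrow> int \<times> int \<Rightarrow> int \<times> int" where
  "sig q (x,y) = (if odd q then (-x,-y) else if q = 4 then (y,x) else (x,-y))"

definition special :: "nat \<Rightarrow> int \<Rightarrow> bool" where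
  "special q A = (if odd q then int q dvd A else even A)"

lemma mm4: "mm 4 = 1" and mm8: "mm 8 = 2" unfolding mm_def by simp_all

lemma key: assumes q: "q \<in> q_vals" and u: "Nf q (x1,y1) = A" and v: "Nf q (x2,y2) = A + int q"
  shows "(special q A \<longrightarrow> Cq q ((x1,y1),(x2,y2))) \<and>
         (\<not> special q A \<longrightarrow> (Cq q ((x1,y1),(x2,y2)) \<longleftrightarrow> \<not> Cq q ((x1,y1), sig q (x2,y2))))"
proof (cases "odd q")
  case True
  then have m: "int q = 4 * mm q - 1" and p: "prime q" using qv[OF q] by auto
  have p': "prime (int q)" using p by simp
  have h1: "y1^2 + x1*y1 + mm q * x1^2 = A" using u True by simp
  have h2: "y2^2 + x2*y2 + mm q * x2^2 = A + int q" using v True by simp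
  note k = odd_key[OF p' m h1 h2]
  have s1: "special q A = (int q dvd A)" using True by (simp add: special_def)
  have s2: "Cq q ((x1,y1),(x2,y2)) = (int q dvd (x2 - x1 + 2*(y2-y1)))" using True by simp
  have s3: "sig q (x2,y2) = (-x2, -y2)" using True by simp
  have s4: "Cq q ((x1,y1),(-x2,-y2)) = (int q dvd (-x2 - x1 + 2*(-y2-y1)))"
    by (simp only: Cq.simps if_P[OF True])
  show ?thesis unfolding s1 s2 s3 s4 by (rule k)
next
  case False
  then have q48: "q = 4 \<or> q = 8" using qv[OF q] by auto
  then show ?thesis
  proof
    assume q4: "q = 4"
    have h1: "y1^2 + x1^2 = A" using u unfolding q4 by (simp add: mm4)
    have h2: "y2^2 + x2^2 = A + 4" using v unfolding q4 by (simp add: mm4)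
    show ?thesis using even4[OF h1 h2] unfolding q4 special_def by (simp add: mm4)
  next
    assume q8: "q = 8"
    have h1: "y1^2 + 2*x1^2 = A" using u unfolding q8 by (simp add: mm8)
    have h2: "y2^2 + 2*x2^2 = A + 8" using v unfolding q8 by (simp add: mm8)
    show ?thesis using even8[OF h1 h2] unfolding q8 special_def by (simp add: mm8)
  qed
qed

lemma Nf_sig: "q \<in> q_vals \<Longrightarrow> Nf q (sig q p) = Nf q p"
  by (cases p) (auto simp: power2_eq_square algebra_simps mm4)

lemma sig_sig: "sig q (sig q p) = p"
  by (cases p) auto

lemma half_card:
  assumes fin: "finite V" and cl: "\<And>v. v \<in> V \<Longrightarrow> s v \<in> V" and inv: "\<And>v. v \<in> V \<Longrightarrow> s (s v) = v"
    and sw: "\<And>v. v \<in> V \<Longrightarrow> Q v \<longleftrightarrow> \<not> Q (s v)"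
  shows "2 * card {v\<in>V. Q v} = card V"
proof -
  let ?X = "{v\<in>V. Q v}" and ?Y = "{v\<in>V. \<not> Q v}"
  have img: "s ` ?X = ?Y"
  proof
    show "s ` ?X \<subseteq> ?Y" using cl sw by auto
    show "?Y \<subseteq> s ` ?X"
    proof
      fix w assume w: "w \<in> ?Y"
      then have "s w \<in> ?X" using cl sw by auto
      moreover have "s (s w) = w" using inv w by auto
      ultimately show "w \<in> s ` ?X" by (metis image_eqI)
    qed
  qed
  have inj: "inj_on s ?X" by (rule inj_onI) (metis (no_types, lifting) inv mem_Collect_eq)
  have cY: "card ?Y = card ?X" using card_image[OF inj] img by simp
  have VU: "V = ?X \<union> ?Y" by auto
  have "card (?X \<union> ?Y) = card ?X + card ?Y"
    by (rule card_Un_disjoint) (use fin in auto)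
  then have "card V = card ?X + card ?Y" using VU by simp
  then show ?thesis using cY by simp
qed

lemma abs_le_sq: "\<bar>t::int\<bar> \<le> t^2"
proof -
  have "\<bar>t\<bar> \<le> \<bar>t\<bar> * \<bar>t\<bar>"
  proof (cases "t = 0")
    case False
    then have "1 \<le> \<bar>t\<bar>" by linarith
    then have "\<bar>t\<bar> * 1 \<le> \<bar>t\<bar> * \<bar>t\<bar>" by (intro mult_left_mono) auto
    then show ?thesis by simp
  qed simp
  then show ?thesis by (simp add: power2_eq_square abs_mult[symmetric])
qed

lemma finite_P: assumes q: "q \<in> q_vals" shows "finite (P q A)"
proof -
  define B where "B = 4 * \<bar>A\<bar>"
  have "P q A \<subseteq> {-B..B} \<times> {-B..B}"
  proof
    fix p assume "p \<in> P q A"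
    then obtain x y where p: "p = (x,y)" and N: "Nf q (x,y) = A" unfolding P_def by (cases p) auto
    have "\<bar>x\<bar> \<le> B \<and> \<bar>y\<bar> \<le> B"
    proof (cases "odd q")
      case True
      then have m: "int q = 4 * mm q - 1" using qv[OF q] by auto
      have q3: "int q \<ge> 1" using q_pos[OF q] by simp
      have e: "(x + 2*y)^2 + int q * x^2 = 4 * A" using N True unfolding m
        by (simp add: power2_eq_square algebra_simps)
      have s1: "(x+2*y)^2 \<ge> 0" "x^2 \<ge> 0" by simp_all
      have "x^2 \<le> int q * x^2" using q3 s1 by (simp add: mult_le_cancel_right1)
      then have x2: "x^2 \<le> 4*A" using e s1 by linarith
      have s2: "(x+2*y)^2 \<le> 4*A" using e s1 q3 by (smt (verit) mult_nonneg_nonneg)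
      have "\<bar>x\<bar> \<le> 4*A" using abs_le_sq[of x] x2 by simp
      moreover have "\<bar>x+2*y\<bar> \<le> 4*A" using abs_le_sq[of "x+2*y"] s2 by simp
      ultimately show ?thesis unfolding B_def by linarith
    next
      case False
      have mp: "mm q \<ge> 1" using mm_pos[OF q] by simp
      have e: "y^2 + mm q * x^2 = A" using N False by simp
      have s1: "y^2 \<ge> 0" "x^2 \<ge> 0" by simp_all
      have "x^2 \<le> mm q * x^2" using mp s1 by (simp add: mult_le_cancel_right1)
      then have "x^2 \<le> A" "y^2 \<le> A" using e s1 mp by (linarith, smt (verit) mult_nonneg_nonneg)
      then show ?thesis using abs_le_sq[of x] abs_le_sq[of y] unfolding B_def by linarith
    qed
    then show "p \<in> {-B..B} \<times> {-B..B}" unfolding p by auto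
  qed
  then show ?thesis by (rule finite_subset) simp
qed

lemma inner_count:
  assumes q: "q \<in> q_vals" and u: "Nf q u = A"
  shows "2 * card {v \<in> P q (A + int q). Cq q (u,v)} = (if special q A then 2 else 1) * card (P q (A + int q))"
proof -
  obtain x1 y1 where uu: "u = (x1,y1)" by (cases u)
  have kk: "\<And>v. v \<in> P q (A + int q) \<Longrightarrow> (special q A \<longrightarrow> Cq q (u,v)) \<and>
         (\<not> special q A \<longrightarrow> (Cq q (u,v) \<longleftrightarrow> \<not> Cq q (u, sig q v)))"
  proof -
    fix v assume "v \<in> P q (A + int q)"
    moreover obtain x2 y2 where vv: "v = (x2,y2)" by (cases v)
    ultimately have "Nf q (x2,y2) = A + int q" by (simp add: P_def)
    then show "?thesis v" using key[OF q, of x1 y1 A x2 y2] u unfolding uu vv by blast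
  qed
  show ?thesis
proof (cases "special q A")
  case True
  have "{v \<in> P q (A + int q). Cq q (u,v)} = P q (A + int q)"
    using kk True by blast
  then show ?thesis using True by simp
next
  case False
  have "2 * card {v \<in> P q (A + int q). Cq q (u,v)} = card (P q (A + int q))"
  proof (rule half_card[where s = "sig q"])
    show "finite (P q (A + int q))" by (rule finite_P[OF q])
    show "\<And>v. v \<in> P q (A + int q) \<Longrightarrow> sig q v \<in> P q (A + int q)"
      unfolding P_def using Nf_sig[OF q] by simp
    show "\<And>v. v \<in> P q (A + int q) \<Longrightarrow> sig q (sig q v) = v" by (rule sig_sig)
    show "\<And>v. v \<in> P q (A + int q) \<Longrightarrow> Cq q (u, v) = (\<not> Cq q (u, sig q v))"
      using kk False by blast
  qed
  then show ?thesis using False by simp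
qed
qed

definition T :: "nat \<Rightarrow> int \<Rightarrow> ((int \<times> int) \<times> (int \<times> int)) set" where
  "T q A = {(u,v). Nf q u = A \<and> Nf q v = A + int q \<and> Cq q (u,v)}"

lemma card_T: assumes q: "q \<in> q_vals"
  shows "2 * card (T q A) = (if special q A then 2 else 1) * card (P q A) * card (P q (A + int q))"
proof -
  have Te: "T q A = Sigma (P q A) (\<lambda>u. {v \<in> P q (A + int q). Cq q (u,v)})"
    unfolding T_def P_def by auto
  have "card (T q A) = (\<Sum>u\<in>P q A. card {v \<in> P q (A + int q). Cq q (u,v)})"
    unfolding Te using finite_P[OF q] by (intro card_SigmaI) auto
  then have "2 * card (T q A) = (\<Sum>u\<in>P q A. 2 * card {v \<in> P q (A + int q). Cq q (u,v)})"
    by (simp add: sum_distrib_left)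
  also have "\<dots> = (\<Sum>u\<in>P q A. (if special q A then 2 else 1) * card (P q (A + int q)))"
  proof (rule sum.cong[OF refl])
    fix u assume "u \<in> P q A"
    then have "Nf q u = A" by (simp add: P_def)
    then show "2 * card {v \<in> P q (A + int q). Cq q (u,v)} = (if special q A then 2 else 1) * card (P q (A + int q))"
      by (rule inner_count[OF q])
  qed
  finally show ?thesis by simp
qed



fun detm :: "int \<times> int \<times> int \<times> int \<Rightarrow> int" where
  "detm (a,b,c,d) = a*d - b*c"

lemma SL2Z_iff: "g \<in> SL2Z \<longleftrightarrow> detm g = 1"
  unfolding SL2Z_def by (cases g) auto

lemma g4: obtains a b c d where "g = (a,b,c,d)"
  by (metis prod_cases4)

lemma Psi_Phi': "q \<in> q_vals \<Longrightarrow> Psi q (Phi q g) = g"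
  by (cases g rule: g4) (simp only: Psi_Phi)

lemma NfPhi': "q \<in> q_vals \<Longrightarrow> Nf q (snd (Phi q g)) = Nf q (fst (Phi q g)) + int q * detm g"
  by (cases g rule: g4) (simp only: NfPhi detm.simps)

lemma C_Phi': "q \<in> q_vals \<Longrightarrow> Cq q (Phi q g)"
  by (cases g rule: g4) (simp only: C_Phi)

lemma Rg_eq': assumes q: "q \<in> q_vals" and g: "g \<in> SL2Z"
  shows "Rg q g = real q / 2 + of_int (Nf q (fst (Phi q g)))"
proof (cases g rule: g4)
  case (1 a b c d)
  then have "a*d - b*c = 1" using g SL2Z_iff by simp
  then show ?thesis unfolding 1 by (rule Rg_eq[OF q])
qed

lemma Phi_Psi': "q \<in> q_vals \<Longrightarrow> Cq q w \<Longrightarrow> Phi q (Psi q w) = w"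
  by (cases w) (auto intro: Phi_Psi)

lemma negm_SL: "g \<in> SL2Z \<Longrightarrow> negm g \<in> SL2Z"
  by (cases g rule: g4) (simp add: SL2Z_def)

lemma negm_negm: "negm (negm g) = g"
  by (cases g rule: g4) simp

lemma negm_neq: "g \<in> SL2Z \<Longrightarrow> negm g \<noteq> g"
  by (cases g rule: g4) (auto simp: SL2Z_def)

lemma mob_negm: "mob (negm g) z = mob g z"
proof (cases g rule: g4)
  case (1 a b c d)
  have "(- of_int a * z + - of_int b) / (- of_int c * z + - of_int d)
        = (of_int a * z + of_int b) / (of_int c * z + of_int d)"
    by (metis (no_types, lifting) minus_add_distrib minus_divide_divide mult_minus_left)
  then show ?thesis unfolding 1 by simp
qed

definition cls :: "int \<times> int \<times> int \<times> int \<Rightarrow> (int \<times> int \<times> int \<times> int) set" where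
  "cls g = {g, negm g}"

lemma Rq_cls: "Rq q (cls g) = Rg q g"
proof -
  have "(SOME h. h \<in> cls g) \<in> cls g" by (rule someI[of _ g]) (simp add: cls_def)
  then have h: "(SOME h. h \<in> cls g) = g \<or> (SOME h. h \<in> cls g) = negm g"
    unfolding cls_def by blast
  have "mob (SOME h. h \<in> cls g) (zq q) = mob g (zq q)"
    using h mob_negm[of g "zq q"] by metis
  then show ?thesis unfolding Rq_def Rg_def pact_def by simp
qed

lemma Rg_negm: "Rg q (negm g) = Rg q g"
  unfolding Rg_def mob_negm ..

definition S :: "nat \<Rightarrow> real \<Rightarrow> (int \<times> int \<times> int \<times> int) set" where
  "S q n = {g \<in> SL2Z. Rg q g = n}"

lemma Gamma_eq: "Gamma_n q n = cls ` S q n"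
  unfolding Gamma_n_def PSL2Z_def S_def cls_def[symmetric]
  by (auto simp: Rq_cls)

lemma card_S_Gamma: assumes fin: "finite (S q n)" shows "card (S q n) = 2 * card (Gamma_n q n)"
proof -
  let ?C = "cls ` S q n"
  have U: "\<Union> ?C = S q n"
  proof
    show "\<Union> ?C \<subseteq> S q n" unfolding cls_def S_def using negm_SL Rg_negm by auto
    show "S q n \<subseteq> \<Union> ?C" unfolding cls_def by auto
  qed
  have "2 * card ?C = card (\<Union> ?C)"
  proof (rule card_partition)
    show "finite ?C" using fin by simp
    show "finite (\<Union> ?C)" using fin U by simp
    show "\<And>c. c \<in> ?C \<Longrightarrow> card c = 2"
      unfolding cls_def S_def using negm_neq by auto
    show "\<And>c1 c2. c1 \<in> ?C \<Longrightarrow> c2 \<in> ?C \<Longrightarrow> c1 \<noteq> c2 \<Longrightarrow> c1 \<inter> c2 = {}"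
      unfolding cls_def using negm_negm by auto
  qed
  then show ?thesis using U Gamma_eq by simp
qed

lemma Phi_inj: "q \<in> q_vals \<Longrightarrow> inj_on (Phi q) X"
  by (rule inj_onI) (metis Psi_Phi')

lemma Phi_image: assumes q: "q \<in> q_vals" and n: "n = real q / 2 + of_int A"
  shows "Phi q ` S q n = T q A"
proof
  show "Phi q ` S q n \<subseteq> T q A"
  proof
    fix w assume "w \<in> Phi q ` S q n"
    then obtain g where g: "g \<in> SL2Z" "Rg q g = n" and w: "w = Phi q g" unfolding S_def by auto
    have "of_int (Nf q (fst (Phi q g))) = (of_int A :: real)" using Rg_eq'[OF q g(1)] g(2) n by simp
    then have A: "Nf q (fst (Phi q g)) = A" by (simp only: of_int_eq_iff)
    have B: "Nf q (snd (Phi q g)) = A + int q" using NfPhi'[OF q, of g] g(1) A by (simp add: SL2Z_iff)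
    show "w \<in> T q A" unfolding T_def w using A B C_Phi'[OF q, of g]
      by (cases "Phi q g") auto
  qed
  show "T q A \<subseteq> Phi q ` S q n"
  proof
    fix w assume w: "w \<in> T q A"
    then obtain u v where uv: "w = (u,v)" "Nf q u = A" "Nf q v = A + int q" "Cq q (u,v)"
      unfolding T_def by auto
    define g where "g = Psi q w"
    have Pg: "Phi q g = w" unfolding g_def using Phi_Psi'[OF q] uv by simp
    have "A + int q = A + int q * detm g" using NfPhi'[OF q, of g] uv unfolding Pg by simp
    then have "detm g = 1" using q_pos[OF q] by simp
    then have gS: "g \<in> SL2Z" by (simp add: SL2Z_iff)
    have "Rg q g = n" using Rg_eq'[OF q gS] unfolding Pg uv(1) using uv n by simp
    then have "g \<in> S q n" using gS unfolding S_def by simp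
    then show "w \<in> Phi q ` S q n" using Pg by force
  qed
qed

lemma finite_T: "q \<in> q_vals \<Longrightarrow> finite (T q A)"
proof -
  assume q: "q \<in> q_vals"
  have "T q A \<subseteq> P q A \<times> P q (A + int q)" unfolding T_def P_def by auto
  then show ?thesis using finite_P[OF q] by (meson finite_SigmaI finite_subset)
qed

lemma emb_inj: assumes q: "q \<in> q_vals" shows "inj (emb q)"
proof (rule injI)
  fix p1 p2 assume e: "emb q p1 = emb q p2"
  obtain x1 y1 x2 y2 where p: "p1 = (x1,y1)" "p2 = (x2,y2)" by (cases p1, cases p2)
  have z: "omegaK q = Complex (mu q) (lam q)" using omega_eq[OF q] unfolding zq_def by simp
  have "Im (emb q p1) = Im (emb q p2)" "Re (emb q p1) = Re (emb q p2)" using e by simp_all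
  then have "x1 * lam q = x2 * lam q" "y1 + x1 * mu q = y2 + x2 * mu q"
    unfolding emb_def z p by simp_all
  then have "x1 = x2" "y1 = y2" using lam_pos[OF q] by simp_all
  then show "p1 = p2" using p by simp
qed

lemma rK_eq: assumes q: "q \<in> q_vals" shows "rK q (of_int A) = card (P q A)"
proof -
  have "{\<alpha> \<in> OK q. normK \<alpha> = of_int A} = emb q ` P q A"
  proof
    show "{\<alpha> \<in> OK q. normK \<alpha> = of_int A} \<subseteq> emb q ` P q A"
    proof
      fix \<alpha> assume "\<alpha> \<in> {\<alpha> \<in> OK q. normK \<alpha> = of_int A}"
      then obtain a b where al: "\<alpha> = of_int a + of_int b * omegaK q" and N: "normK \<alpha> = of_int A"
        unfolding OK_def by auto
      have ae: "\<alpha> = emb q (b,a)" unfolding al emb_def by simp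
      have "of_int (Nf q (b,a)) = (of_int A :: real)" using N normK_emb[OF q, of b a] ae by simp
      then have "Nf q (b,a) = A" by (simp only: of_int_eq_iff)
      then show "\<alpha> \<in> emb q ` P q A" unfolding ae P_def by auto
    qed
    show "emb q ` P q A \<subseteq> {\<alpha> \<in> OK q. normK \<alpha> = of_int A}"
    proof
      fix \<alpha> assume "\<alpha> \<in> emb q ` P q A"
      then obtain x y where al: "\<alpha> = emb q (x,y)" and N: "Nf q (x,y) = A" unfolding P_def by auto
      have "\<alpha> \<in> OK q" unfolding al emb_def OK_def by auto
      moreover have "normK \<alpha> = of_int A" unfolding al normK_emb[OF q] N ..
      ultimately show "\<alpha> \<in> {\<alpha> \<in> OK q. normK \<alpha> = of_int A}" by simp
    qed
  qed
  then show ?thesis unfolding rK_def using card_image[OF inj_on_subset[OF emb_inj[OF q]]] by simp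
qed

lemma cn_eq: assumes q: "q \<in> q_vals" and n: "n = real q / 2 + of_int A"
  shows "cn q n = (if special q A then 1/2 else 1/4)"
proof (cases "odd q")
  case True
  have pn: "prime q" using qv[OF q] True by auto
  then have p: "prime (int q)" by simp
  have m: "int q = 4 * mm q - 1" using qv[OF q] True by auto
  have "(\<exists>k::int. 2 * n = real q * of_int k) \<longleftrightarrow> (\<exists>k::int. 2 * A + int q = int q * k)"
  proof -
    have "\<And>k::int. (2 * n = real q * of_int k) \<longleftrightarrow> (2 * A + int q = int q * k)"
    proof -
      fix k :: int
      have "2 * n = of_int (2 * A + int q)" unfolding n by simp
      moreover have "real q * of_int k = of_int (int q * k)" by simp
      ultimately show "(2 * n = real q * of_int k) \<longleftrightarrow> (2 * A + int q = int q * k)"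
        by (simp only: of_int_eq_iff)
    qed
    then show ?thesis by simp
  qed
  also have "\<dots> \<longleftrightarrow> int q dvd (2 * A + int q)" by (auto simp: dvd_def)
  also have "\<dots> \<longleftrightarrow> int q dvd 2 * A" by (simp add: dvd_add_left_iff)
  also have "\<dots> \<longleftrightarrow> int q dvd A"
  proof -
    have "\<not> int q dvd 2"
    proof
      assume "int q dvd 2"
      then have "int q \<le> 2" by (rule zdvd_imp_le) simp
      then show False using m p prime_ge_2_int[OF p] by presburger
    qed
    then show ?thesis using p by (simp add: prime_dvd_mult_iff)
  qed
  finally show ?thesis unfolding cn_def special_def using True by simp
next
  case False
  then have m: "int q = 4 * mm q" using qv[OF q] by auto
  have "(\<exists>k::int. n = 2 * of_int k) \<longleftrightarrow> (\<exists>k::int. 2 * mm q + A = 2 * k)"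
  proof -
    have "\<And>k::int. (n = 2 * of_int k) \<longleftrightarrow> (2 * mm q + A = 2 * k)"
    proof -
      fix k :: int
      have "real q = of_int (int q)" by simp
      then have "n = of_int (2 * mm q + A)" unfolding n m by simp
      then show "(n = 2 * of_int k) \<longleftrightarrow> (2 * mm q + A = 2 * k)"
        by (metis of_int_eq_iff of_int_mult of_int_numeral)
    qed
    then show ?thesis by simp
  qed
  also have "\<dots> \<longleftrightarrow> even A" by (metis dvd_add_right_iff dvd_def dvd_triv_left)
  finally show ?thesis unfolding cn_def special_def using False by simp
qed



theorem proposition1p3:
  fixes q :: nat and n :: real
  assumes "q \<in> q_vals"
    and "n \<in> Nset q"
  shows "real (card (Gamma_n q n)) =
           cn q n * real (rK q (n - 2 * (lam q)\<^sup>2)) * real (rK q (n + 2 * (lam q)\<^sup>2))"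
proof -
  note q = assms(1)
  obtain \<gamma> where \<gamma>: "\<gamma> \<in> PSL2Z" "n = Rq q \<gamma>" using assms(2) unfolding Nset_def by auto
  then obtain g where g: "g \<in> SL2Z" "\<gamma> = cls g" unfolding PSL2Z_def cls_def by auto
  define A where "A = Nf q (fst (Phi q g))"
  have n: "n = real q / 2 + of_int A" using \<gamma>(2) g Rq_cls Rg_eq'[OF q g(1)] unfolding A_def by simp
  have img: "Phi q ` S q n = T q A" by (rule Phi_image[OF q n])
  have inj: "inj_on (Phi q) (S q n)" by (rule Phi_inj[OF q])
  have finS: "finite (S q n)" using finite_T[OF q] img inj by (metis finite_imageD)
  have cST: "card (S q n) = card (T q A)" using card_image[OF inj] img by simp
  have cG: "card (S q n) = 2 * card (Gamma_n q n)" by (rule card_S_Gamma[OF finS])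
  have cT: "2 * card (T q A) = (if special q A then 2 else 1) * card (P q A) * card (P q (A + int q))"
    by (rule card_T[OF q])
  have l: "2 * (lam q)^2 = real q / 2" using lam_sq[of q] by simp
  have r1: "rK q (n - 2 * (lam q)\<^sup>2) = card (P q A)"
    using rK_eq[OF q, of A] unfolding l n by simp
  have r2: "rK q (n + 2 * (lam q)\<^sup>2) = card (P q (A + int q))"
  proof -
    have "n + 2 * (lam q)\<^sup>2 = of_int (A + int q)" unfolding l n by simp
    then show ?thesis using rK_eq[OF q, of "A + int q"] by simp
  qed
  have c: "cn q n = (if special q A then 1/2 else 1/4)" by (rule cn_eq[OF q n])
  have e: "4 * card (Gamma_n q n) = (if special q A then 2 else 1) * card (P q A) * card (P q (A + int q))"
    using cG cST cT by simp
  then have "real (4 * card (Gamma_n q n)) = real ((if special q A then 2 else 1) * card (P q A) * card (P q (A + int q)))"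
    by (simp only:)
  then show ?thesis unfolding r1 r2 c by (cases "special q A") simp_all
qed

end
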